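(* Let $X$ be a separable Banach space with a $1$-norming FMD $(E_j)$. Let $(\mathcal A_m)_{m\in\mathbb N}$ be an increasing sequence of closed subsets of $\mathcal B_\omega$, each closed under taking tails, and let $\mathcal A=\bigcup_{m}\mathcal A_m$. If Player I has a winning strategy for the $\mathcal A$-game, then there is $m\in\mathbb N$ such that Player I has a winning strategy for the $\mathcal A_m$-game.
   Context: FMD: a sequence $(E_k)$ of finite dimensional subspaces of $X$ with biorthogonal $F_k=\{f\in X^*:f|_{E_j}=0\ \forall j\neq k\}$ such that $\mathrm{span}(E_k)$ is dense, $E_k\cap\overline{\mathrm{span}(E_j:j\neq k)}=\{0\}$ and $(F_k)$ is total; $1$-norming means $\sup\{f(x):f\in\mathrm{span}(F_j),\|f\|\le1\}\ge\|x\|$. $c_{00}(E_j)=\mathrm{span}(E_j:j\in\mathbb N)$; $\mathrm{supp}_E(x)$ is the set of $j$ with nonzero $E_j$-component of $x$, and $\mathrm{rg}_E(x)$ the smallest interval containing it. $\mathcal B_\omega$ is the set of infinite block sequences $(x_j)$ in $S_X\cap c_{00}(E_j)$ (i.e. $\max\mathrm{supp}_E(x_j)<\min\mathrm{supp}_E(x_{j+1})$), with the product of the norm topologies; closed refers to this topology. $\mathcal A\subset\mathcal B_\omega$ is closed under taking tails if $(x_{j+n})_{j\in\mathbb N}\in\mathcal A$ whenever $(x_j)\in\mathcal A$ and $n\in\mathbb N$. The $\mathcal A$-game: Player I chooses $k_1\in\mathbb N$, Player II chooses $x_1\in S_X\cap c_{00}(E_j)$ with $\min\mathrm{supp}_E(x_1)\ge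 k_1$; then Player I chooses $k_2>\max\mathrm{rg}_E(x_1)$, Player II chooses $x_2\in S_X\cap c_{00}(E_j)$ with $\min\mathrm{supp}_E(x_2)\ge k_2$, and so on indefinitely. Player I wins if the resulting sequence $(x_j)$ lies in $\mathcal A$. A winning strategy for Player I is a rule assigning to each finite sequence of previous moves of Player II her next legal choice $k_{n+1}$, such that every play following it results in a sequence in $\mathcal A$. *)

theory Defs
  imports "HOL-Analysis.Analysis"
begin

definition separable_space :: "'a::metric_space itself \<Rightarrow> bool" where
  "separable_space _ \<longleftrightarrow> (\<exists>D::'a set. countable D \<and> closure D = UNIV)"

definition Fdual :: "(nat \<Rightarrow> 'a::real_normed_vector set) \<Rightarrow> nat \<Rightarrow> ('a \<Rightarrow> real) set" where
  "Fdual E k = {f. bounded_linear f \<and> (\<forall>j. j \<noteq> k \<longrightarrow> (\<forall>y\<in>E j. f y = 0))}"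

text \<open>Linear span of the union of the F_j inside X* (finite sums of elements of the F_j;
  the F_j are subspaces).\<close>
definition spanF :: "(nat \<Rightarrow> 'a::real_normed_vector set) \<Rightarrow> ('a \<Rightarrow> real) set" where
  "spanF E = {f. \<exists>J c. finite J \<and> (\<forall>j\<in>J. c j \<in> Fdual E j) \<and> f = (\<lambda>x. \<Sum>j\<in>J. c j x)}"

definition is_FMD :: "(nat \<Rightarrow> 'a::real_normed_vector set) \<Rightarrow> bool" where
  "is_FMD E \<longleftrightarrow>
     (\<forall>k. subspace (E k) \<and> (\<exists>B. finite B \<and> B \<subseteq> E k \<and> span B = E k))
   \<and> closure (span (\<Union>k. E k)) = UNIV
   \<and> (\<forall>k. E k \<inter> closure (span (\<Union>j\<in>{j. j \<noteq> k}. E j)) = {0})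
   \<and> (\<forall>x. (\<forall>k. \<forall>f\<in>Fdual E k. f x = 0) \<longrightarrow> x = 0)"

definition one_norming :: "(nat \<Rightarrow> 'a::real_normed_vector set) \<Rightarrow> bool" where
  "one_norming E \<longleftrightarrow> (\<forall>x. Sup {f x | f. f \<in> spanF E \<and> onorm f \<le> 1} \<ge> norm x)"

definition c00 :: "(nat \<Rightarrow> 'a::real_vector set) \<Rightarrow> 'a set" where
  "c00 E = span (\<Union>k. E k)"

text \<open>The (unique, for an FMD) decomposition of x \<in> c00(E_j) into E_j-components.\<close>
definition is_decomp :: "(nat \<Rightarrow> 'a::real_vector set) \<Rightarrow> 'a \<Rightarrow> (nat \<Rightarrow> 'a) \<Rightarrow> bool" where
  "is_decomp E x c \<longleftrightarrow> finite {j. c j \<noteq> 0} \<and> (\<forall>j. c j \<in> E j) \<and> x = (\<Sum>j\<in>{j. c j \<noteq> 0}. c j)"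

definition comp :: "(nat \<Rightarrow> 'a::real_vector set) \<Rightarrow> 'a \<Rightarrow> nat \<Rightarrow> 'a" where
  "comp E x = (THE c. is_decomp E x c)"

definition suppE :: "(nat \<Rightarrow> 'a::real_vector set) \<Rightarrow> 'a \<Rightarrow> nat set" where
  "suppE E x = {j. comp E x j \<noteq> 0}"

definition Bomega :: "(nat \<Rightarrow> 'a::real_normed_vector set) \<Rightarrow> (nat \<Rightarrow> 'a) set" where
  "Bomega E = {x. (\<forall>n. x n \<in> sphere 0 1 \<inter> c00 E) \<and>
      (\<forall>n. \<forall>a\<in>suppE E (x n). \<forall>b\<in>suppE E (x (Suc n)). a < b)}"

definition closed_under_tails :: "(nat \<Rightarrow> 'a) set \<Rightarrow> bool" where
  "closed_under_tails A \<longleftrightarrow> (\<forall>x\<in>A. \<forall>n. (\<lambda>j. x (j + n)) \<in> A)"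

definition legal_move :: "(nat \<Rightarrow> 'a::real_normed_vector set) \<Rightarrow> nat \<Rightarrow> 'a \<Rightarrow> bool" where
  "legal_move E k x \<longleftrightarrow> x \<in> sphere 0 1 \<inter> c00 E \<and> (\<forall>a\<in>suppE E x. k \<le> a)"

text \<open>A strategy for Player I maps the finite list of previous moves of Player II to
  her next choice.  A finite position follows sigma if each move of II was legal.\<close>
definition follows_fin :: "(nat \<Rightarrow> 'a::real_normed_vector set) \<Rightarrow> ('a list \<Rightarrow> nat) \<Rightarrow> 'a list \<Rightarrow> bool" where
  "follows_fin E \<sigma> xs \<longleftrightarrow> (\<forall>i<length xs. legal_move E (\<sigma> (take i xs)) (xs ! i))"

definition follows :: "(nat \<Rightarrow> 'a::real_normed_vector set) \<Rightarrow> ('a list \<Rightarrow> nat) \<Rightarrow> (nat \<Rightarrow> 'a) \<Rightarrow> bool" where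
  "follows E \<sigma> x \<longleftrightarrow> (\<forall>n. legal_move E (\<sigma> (map x [0..<n])) (x n))"

definition legal_strategy :: "(nat \<Rightarrow> 'a::real_normed_vector set) \<Rightarrow> ('a list \<Rightarrow> nat) \<Rightarrow> bool" where
  "legal_strategy E \<sigma> \<longleftrightarrow> (\<forall>xs. xs \<noteq> [] \<and> follows_fin E \<sigma> xs \<longrightarrow>
       (\<forall>a\<in>suppE E (last xs). a < \<sigma> xs))"

definition winning_strategy_I :: "(nat \<Rightarrow> 'a::real_normed_vector set) \<Rightarrow> (nat \<Rightarrow> 'a) set \<Rightarrow> ('a list \<Rightarrow> nat) \<Rightarrow> bool" where
  "winning_strategy_I E A \<sigma> \<longleftrightarrow> legal_strategy E \<sigma> \<and> (\<forall>x. follows E \<sigma> x \<longrightarrow> x \<in> A)"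

end

theory Submission
  imports Defs
begin

lemma fun_tendsto_coord:
  fixes Z :: "nat \<Rightarrow> nat \<Rightarrow> 'b::topological_space"
  assumes "\<And>i. ((\<lambda>n. Z n i) \<longlongrightarrow> w i) sequentially"
  shows "(Z \<longlongrightarrow> w) sequentially"
proof -
  have "limitin (product_topology (\<lambda>i. euclidean) UNIV) Z w sequentially"
    using assms by (simp add: limitin_componentwise)
  then show ?thesis by (simp add: euclidean_product_topology)
qed

lemma closed_prefix:
  fixes A :: "(nat \<Rightarrow> 'b::topological_space) set"
  assumes cl: "closedin (top_of_set B) A" and wB: "w \<in> B" and wA: "w \<notin> A"
  shows "\<exists>N. \<forall>z\<in>A. \<not> (\<forall>i<N. z i = w i)"
proof (rule ccontr)
  assume "\<not> ?thesis"
  then have "\<forall>N. \<exists>z\<in>A. \<forall>i<N. z i = w i" by blast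
  then obtain Z where Z: "\<And>N. Z N \<in> A" "\<And>N i. i < N \<Longrightarrow> Z N i = w i" by metis
  obtain C where C: "closed C" "A = B \<inter> C" using cl closedin_closed by metis
  have "(Z \<longlongrightarrow> w) sequentially"
  proof (rule fun_tendsto_coord)
    fix i
    have "eventually (\<lambda>n. Z n i = w i) sequentially"
      using Z(2) eventually_sequentially[of "\<lambda>n. Z n i = w i"] by (metis Suc_le_lessD)
    then show "((\<lambda>n. Z n i) \<longlongrightarrow> w i) sequentially" by (rule tendsto_eventually)
  qed
  then have "w \<in> C" using closed_sequentially[OF C(1)] Z(1) C(2) by blast
  then show False using wA wB C(2) by blast
qed

lemma follows_Bomega:
  assumes "legal_strategy E \<sigma>" "follows E \<sigma> x"
  shows "x \<in> Bomega E"
  unfolding Bomega_def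
proof (intro CollectI conjI allI ballI)
  fix n show "x n \<in> sphere 0 1 \<inter> c00 E" using assms(2) by (simp add: follows_def legal_move_def)
next
  fix n a b assume a: "a \<in> suppE E (x n)" and b: "b \<in> suppE E (x (Suc n))"
  let ?xs = "map x [0..<Suc n]"
  have ff: "follows_fin E \<sigma> ?xs"
    using assms(2) unfolding follows_fin_def follows_def
    by (simp add: take_map del: upt_Suc)
  have "a < \<sigma> ?xs" using assms(1) ff a unfolding legal_strategy_def by auto
  moreover have "\<sigma> ?xs \<le> b" using assms(2) b unfolding follows_def legal_move_def
    by (metis (no_types, lifting))
  ultimately show "a < b" by simp
qed

lemma step:
  assumes nowin: "\<And>\<sigma>. \<not> winning_strategy_I E A \<sigma>"
    and leg: "legal_strategy E \<sigma>"
    and tails: "closed_under_tails A"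
    and cl: "closedin (top_of_set (Bomega E)) A"
    and p: "follows_fin E \<sigma> p"
  shows "\<exists>q. follows_fin E \<sigma> q \<and> take (length p) q = p \<and> length p < length q \<and>
      (\<forall>z\<in>A. map z [0..<length q] \<noteq> q)"
proof -
  define \<tau> where "\<tau> = (\<lambda>ys. \<sigma> (p @ ys))"
  have ffapp: "follows_fin E \<sigma> (p @ ys)" if "follows_fin E \<tau> ys" for ys
    using p that unfolding follows_fin_def \<tau>_def
    by (auto simp: nth_append less_diff_conv2 add.commute[of _ "length p"])
  have "legal_strategy E \<tau>"
    unfolding legal_strategy_def
  proof (intro allI impI ballI)
    fix xs a assume xs: "xs \<noteq> [] \<and> follows_fin E \<tau> xs" and a: "a \<in> suppE E (last xs)"
    have "follows_fin E \<sigma> (p @ xs)" using ffapp xs by blast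
    moreover have "p @ xs \<noteq> []" "last (p @ xs) = last xs" using xs by auto
    ultimately show "a < \<tau> xs" using leg a unfolding legal_strategy_def \<tau>_def by metis
  qed
  then obtain y where y: "follows E \<tau> y" "y \<notin> A" using nowin unfolding winning_strategy_I_def by blast
  define w where "w = (\<lambda>i. if i < length p then p ! i else y (i - length p))"
  have mw: "map w [0..<n] = (if n \<le> length p then take n p else p @ map y [0..<n - length p])" for n
    by (rule nth_equalityI) (auto simp: w_def nth_append)
  have mw2: "map w [0..<n] = p @ map y [0..<n - length p]" if "length p \<le> n" for n
    using that by (intro nth_equalityI) (auto simp: w_def nth_append)
  have fw: "follows E \<sigma> w"
    unfolding follows_def
  proof
    fix n
    show "legal_move E (\<sigma> (map w [0..<n])) (w n)"
    proof (cases "n < length p")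
      case True
      then show ?thesis using p mw[of n] unfolding follows_fin_def by (simp add: w_def)
    next
      case False
      then have "legal_move E (\<tau> (map y [0..<n - length p])) (y (n - length p))"
        using y(1) unfolding follows_def by blast
      then show ?thesis using False mw2[of n] unfolding \<tau>_def w_def by simp
    qed
  qed
  have wB: "w \<in> Bomega E" using follows_Bomega[OF leg fw] .
  have "(\<lambda>j. w (j + length p)) = y" by (auto simp: w_def)
  then have wA: "w \<notin> A" using tails y(2) unfolding closed_under_tails_def by metis
  obtain N where N: "\<forall>z\<in>A. \<not> (\<forall>i<N. z i = w i)" using closed_prefix[OF cl wB wA] by blast
  define q where "q = map w [0..<max N (Suc (length p))]"
  have "follows_fin E \<sigma> q"
    using fw unfolding follows_fin_def follows_def q_def by (simp add: take_map)
  moreover have "take (length p) q = p"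
    unfolding q_def by (rule nth_equalityI) (auto simp: w_def)
  moreover have "length p < length q" by (simp add: q_def)
  moreover have "\<forall>z\<in>A. map z [0..<length q] \<noteq> q"
  proof (intro ballI notI)
    fix z assume z: "z \<in> A" "map z [0..<length q] = q"
    have "\<forall>i<N. z i = w i"
    proof (intro allI impI)
      fix i assume "i < N"
      then have "i < length q" by (simp add: q_def)
      then have "map z [0..<length q] ! i = q ! i" using z(2) by simp
      then show "z i = w i" using \<open>i < length q\<close> by (simp add: q_def)
    qed
    then show False using N z(1) by blast
  qed
  ultimately show ?thesis by blast
qed

theorem proposition6p6:
  fixes E :: "nat \<Rightarrow> 'a::banach set"
    and A :: "nat \<Rightarrow> (nat \<Rightarrow> 'a) set"
  assumes "separable_space TYPE('a)"
    and "is_FMD E"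
    and "one_norming E"
    and "\<And>m. A m \<subseteq> Bomega E"
    and "\<And>m. closedin (top_of_set (Bomega E)) (A m)"
    and "\<And>m. closed_under_tails (A m)"
    and "\<And>m. A m \<subseteq> A (Suc m)"
    and "\<exists>\<sigma>. winning_strategy_I E (\<Union>m. A m) \<sigma>"
  shows "\<exists>m. \<exists>\<sigma>. winning_strategy_I E (A m) \<sigma>"
proof (rule ccontr)
  assume nw: "\<not> ?thesis"
  obtain \<sigma> where \<sigma>: "winning_strategy_I E (\<Union>m. A m) \<sigma>" using assms(8) by blast
  have leg: "legal_strategy E \<sigma>" using \<sigma> by (simp add: winning_strategy_I_def)
  define R where "R = (\<lambda>m p q. follows_fin E \<sigma> q \<and> take (length p) q = p \<and> length p < length q \<and>
      (\<forall>z\<in>A m. map z [0..<length q] \<noteq> q))"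
  have stp: "\<exists>q. R m p q" if "follows_fin E \<sigma> p" for m p
    unfolding R_def using step[of E "A m" \<sigma> p] nw leg assms(5,6) that by blast
  define P where "P = rec_nat [] (\<lambda>m p. SOME q. R m p q)"
  have P0: "P 0 = []" by (simp add: P_def)
  have PS: "P (Suc m) = (SOME q. R m (P m) q)" for m by (simp add: P_def)
  have ffP: "follows_fin E \<sigma> (P m)" for m
  proof (induction m)
    case 0 then show ?case by (simp add: P0 follows_fin_def)
  next
    case (Suc m)
    then have "R m (P m) (P (Suc m))" unfolding PS by (rule someI_ex[OF stp])
    then show ?case by (simp add: R_def)
  qed
  have RP: "R m (P m) (P (Suc m))" for m unfolding PS by (rule someI_ex[OF stp[OF ffP]])
  have lenP: "m \<le> length (P m)" for m
  proof (induction m)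
    case (Suc m) then show ?case using RP[of m] by (simp add: R_def)
  qed simp
  have prefP: "take (length (P k)) (P (k + d)) = P k" for k d
  proof (induction d)
    case (Suc d)
    have "take (length (P (k+d))) (P (Suc (k + d))) = P (k + d)" using RP[of "k+d"] by (simp add: R_def)
    moreover have "length (P k) \<le> length (P (k + d))"
      using Suc by (metis length_take min.absorb_iff2 nat_le_linear)
    ultimately show ?case using Suc by (metis add_Suc_right min.absorb1 take_take)
  qed simp
  have nthP: "P k ! i = P l ! i" if "i < length (P k)" "k \<le> l" for k l i
  proof -
    have "P k = take (length (P k)) (P l)" using prefP[of k "l - k"] that by simp
    then show ?thesis using that by (metis nth_take)
  qed
  define x where "x = (\<lambda>n. P (Suc n) ! n)"
  have xP: "x i = P k ! i" if "i < length (P k)" for i k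
  proof -
    have a: "i < length (P (Suc i))" using lenP[of "Suc i"] by simp
    show ?thesis unfolding x_def
      using nthP[OF a, of "max (Suc i) k"] nthP[OF that, of "max (Suc i) k"] by simp
  qed
  have mapx: "map x [0..<length (P k)] = P k" for k
    by (rule nth_equalityI) (auto simp: xP)
  have "follows E \<sigma> x"
    unfolding follows_def
  proof
    fix n
    have n: "n < length (P (Suc n))" using lenP[of "Suc n"] by simp
    have "legal_move E (\<sigma> (take n (P (Suc n)))) (P (Suc n) ! n)"
      using ffP[of "Suc n"] n unfolding follows_fin_def by blast
    moreover have "take n (P (Suc n)) = map x [0..<n]"
      using n by (intro nth_equalityI) (auto simp: xP[of _ "Suc n"])
    ultimately show "legal_move E (\<sigma> (map x [0..<n])) (x n)" using xP[OF n] by simp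
  qed
  then obtain m where m: "x \<in> A m" using \<sigma> unfolding winning_strategy_I_def by blast
  have "\<forall>z\<in>A m. map z [0..<length (P (Suc m))] \<noteq> P (Suc m)" using RP[of m] by (simp add: R_def)
  then show False using m mapx by blast
qed

end
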